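(* Fix all data of the risk-averse multistage and two-stage capacity planning models described in the context except the risk parameters $\lambda=(\lambda_2,\ldots,\lambda_T)\in[0,1]^{T-1}$ (the confidence levels $\alpha_t\in(0,1)$ are fixed), and write $z^{MS}_R(\lambda)$ and $z^{TS}_R(\lambda)$ for the optimal values of the multistage model and the two-stage model, respectively. Then both $z^{MS}_R$ and $z^{TS}_R$ increase as $\lambda$ increases: if $\lambda_t\le\hat\lambda_t$ for all $t=2,\ldots,T$, then $z^{MS}_R(\lambda)\le z^{MS}_R(\hat\lambda)$ and $z^{TS}_R(\lambda)\le z^{TS}_R(\hat\lambda)$.
   Context: Setting. Fix integers $T\ge 2$ (periods), $M\ge1$ (facilities), $N\ge1$ (customer sites). For each period $t$: maintenance costs $f_{ti}\ge 0$ ($i\in[M]$), forming $\boldsymbol f_t\in\mathbb R^M$; operational costs $c_{tij}\ge0$, forming $\boldsymbol c_t\in\mathbb R^{MN}$; capacities $h_{ti}>0$. Vectors $\boldsymbol y\in\mathbb R^{MN}$ are indexed by pairs $(i,j)$. $\boldsymbol A_t\in\mathbb R^{N\times MN}$ is the matrix with $(\boldsymbol A_t\boldsymbol y)_j=\sum_{i=1}^M y_{ij}$ and $\boldsymbol B_t\in\mathbb R^{M\times MN}$ the matrix with $(\boldsymbol B_t\boldsymbol y)_i=\frac1{h_{ti}}\sum_{j=1}^N y_{ij}$. Scenario tree: a finite rooted tree with node set $\mathcal T$ and root $1$, all root-to-leaf paths having $T$ nodes; $\mathcal T_t$ is the set of nodes at depth $t$ ($\mathcal T_1=\{1\}$),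 $t_n$ the period of node $n$, $\mathcal L=\mathcal T_T$ the leaves, $a(n)$ the parent of $n\ne1$, $\mathcal C(n)$ the set of children of $n$, $\mathcal P(n)$ the set of nodes on the path from the root to $n$ (inclusive). Each node has a probability $p_n>0$ with $\sum_{n\in\mathcal T_t}p_n=1$ for each $t$ and $\sum_{m\in\mathcal C(n)}p_m=p_n$ for $n\notin\mathcal L$, and a demand vector $\boldsymbol d_n\in\mathbb R^N_{\ge0}$. Risk parameters $\lambda_t\in[0,1]$, $\alpha_t\in(0,1)$, $t=2,\ldots,T$. Define $\tilde{\boldsymbol f}_n=\boldsymbol f_{t_n}$ if $n=1$ and $(1-\lambda_{t_n})\boldsymbol f_{t_n}$ otherwise; $\tilde{\boldsymbol c}_n=\boldsymbol c_{t_n}$ if $n=1$ and $(1-\lambda_{t_n})\boldsymbol c_{t_n}$ otherwise; $\tilde\lambda_n=0$ if $n\in\mathcal L$ and $\lambda_{t_n+1}$ otherwise; $\tilde\alpha_n=0$ if $n=1$ and $\lambda_{t_n}/(1-\alpha_{t_n})$ otherwise. Multistage model: $z^{MS}_R=\min\sum_{n\in\mathcal T}p_n\big(\tilde{\boldsymbol f}_n^{\mathsf T}\sum_{m\in\mathcal P(n)}\boldsymbol x_m+\tilde{\boldsymbol c}_n^{\mathsf T}\boldsymbol y_n+\tilde\lambda_n\eta_n+\tilde\alpha_nu_n\big)$ over $\boldsymbol x_n\in\mathbb Z^M_+$, $\boldsymbol y_n\in\mathbb R^{MN}_+$ ($n\in\mathcal T$), $\eta_n\in\mathbb R$ ($n\notin\mathcal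 L$), $u_n\ge0$ ($n\ne1$) (terms with $\eta_n$ for leaves and $u_1$ are absent), subject to $\boldsymbol A_{t_n}\boldsymbol y_n=\boldsymbol d_n$ and $\boldsymbol B_{t_n}\boldsymbol y_n\le\sum_{m\in\mathcal P(n)}\boldsymbol x_m$ for all $n\in\mathcal T$, and $u_n+\eta_{a(n)}\ge\boldsymbol f_{t_n}^{\mathsf T}\sum_{m\in\mathcal P(n)}\boldsymbol x_m+\boldsymbol c_{t_n}^{\mathsf T}\boldsymbol y_n$ for all $n\ne1$. Two-stage model: same as the multistage model with the additional constraints $\boldsymbol x_m=\boldsymbol x_n$ for all $m,n\in\mathcal T_t$, $t=1,\ldots,T$; its optimal value is $z^{TS}_R$. *)

theory Defs
  imports "HOL-Analysis.Analysis"
begin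

(* Facilities are indexed by {1..M}, sites by {1..N},
   periods by {1..T}. *)
record 'n cp_data =
  nT    :: nat                          (* T: number of periods *)
  nM    :: nat                          (* M: number of facilities *)
  nN    :: nat                          (* N: number of customer sites *)
  fc    :: "nat \<Rightarrow> nat \<Rightarrow> real"
  cc    :: "nat \<Rightarrow> nat \<Rightarrow> nat \<Rightarrow> real"
  hc    :: "nat \<Rightarrow> nat \<Rightarrow> real"
  nodes :: "'n set"
  root  :: "'n"
  par   :: "'n \<Rightarrow> 'n"
  per   :: "'n \<Rightarrow> nat"
  prob  :: "'n \<Rightarrow> real"
  dem   :: "'n \<Rightarrow> nat \<Rightarrow> real"
  alph  :: "nat \<Rightarrow> real"

definition children :: "'n cp_data \<Rightarrow> 'n \<Rightarrow> 'n set" where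
  "children D n = {m \<in> nodes D. m \<noteq> root D \<and> par D m = n}"

definition path_nodes :: "'n cp_data \<Rightarrow> 'n \<Rightarrow> 'n set" where
  "path_nodes D n = {(par D ^^ k) n | k. k < per D n}"

definition is_leaf :: "'n cp_data \<Rightarrow> 'n \<Rightarrow> bool" where
  "is_leaf D n \<longleftrightarrow> per D n = nT D"

definition valid_data :: "'n cp_data \<Rightarrow> bool" where
  "valid_data D \<longleftrightarrow>
     nT D \<ge> 2 \<and> nM D \<ge> 1 \<and> nN D \<ge> 1 \<and>
     (\<forall>t\<in>{1..nT D}. \<forall>i\<in>{1..nM D}. fc D t i \<ge> 0 \<and> hc D t i > 0) \<and>
     (\<forall>t\<in>{1..nT D}. \<forall>i\<in>{1..nM D}. \<forall>j\<in>{1..nN D}. cc D t i j \<ge> 0) \<and>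
     \<comment> \<open>scenario tree: rooted, every root-to-leaf path has T nodes\<close>
     finite (nodes D) \<and> root D \<in> nodes D \<and> per D (root D) = 1 \<and>
     (\<forall>n\<in>nodes D. 1 \<le> per D n \<and> per D n \<le> nT D) \<and>
     (\<forall>n\<in>nodes D - {root D}. par D n \<in> nodes D \<and> per D n = per D (par D n) + 1) \<and>
     (\<forall>n\<in>nodes D. per D n < nT D \<longrightarrow> children D n \<noteq> {}) \<and>
     \<comment> \<open>probabilities\<close>
     (\<forall>n\<in>nodes D. prob D n > 0) \<and>
     (\<forall>t\<in>{1..nT D}. (\<Sum>n\<in>{n\<in>nodes D. per D n = t}. prob D n) = 1) \<and>
     (\<forall>n\<in>nodes D. \<not> is_leaf D n \<longrightarrow> (\<Sum>m\<in>children D n. prob D m) = prob D n) \<and>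
     \<comment> \<open>demands\<close>
     (\<forall>n\<in>nodes D. \<forall>j\<in>{1..nN D}. dem D n j \<ge> 0) \<and>
     \<comment> \<open>confidence levels\<close>
     (\<forall>t\<in>{2..nT D}. 0 < alph D t \<and> alph D t < 1)"

definition valid_lambda :: "'n cp_data \<Rightarrow> (nat \<Rightarrow> real) \<Rightarrow> bool" where
  "valid_lambda D lam \<longleftrightarrow> (\<forall>t\<in>{2..nT D}. 0 \<le> lam t \<and> lam t \<le> 1)"

definition cap :: "'n cp_data \<Rightarrow> ('n \<Rightarrow> nat \<Rightarrow> nat) \<Rightarrow> 'n \<Rightarrow> nat \<Rightarrow> real" where
  "cap D x n i = (\<Sum>m\<in>path_nodes D n. real (x m i))"

definition f_tilde :: "'n cp_data \<Rightarrow> (nat \<Rightarrow> real) \<Rightarrow> 'n \<Rightarrow> nat \<Rightarrow> real" where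
  "f_tilde D lam n i =
     (if n = root D then fc D (per D n) i else (1 - lam (per D n)) * fc D (per D n) i)"

definition c_tilde :: "'n cp_data \<Rightarrow> (nat \<Rightarrow> real) \<Rightarrow> 'n \<Rightarrow> nat \<Rightarrow> nat \<Rightarrow> real" where
  "c_tilde D lam n i j =
     (if n = root D then cc D (per D n) i j else (1 - lam (per D n)) * cc D (per D n) i j)"

definition lambda_tilde :: "'n cp_data \<Rightarrow> (nat \<Rightarrow> real) \<Rightarrow> 'n \<Rightarrow> real" where
  "lambda_tilde D lam n = (if is_leaf D n then 0 else lam (per D n + 1))"

definition alpha_tilde :: "'n cp_data \<Rightarrow> (nat \<Rightarrow> real) \<Rightarrow> 'n \<Rightarrow> real" where
  "alpha_tilde D lam n =
     (if n = root D then 0 else lam (per D n) / (1 - alph D (per D n)))"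

definition objective ::
  "'n cp_data \<Rightarrow> (nat \<Rightarrow> real) \<Rightarrow> ('n \<Rightarrow> nat \<Rightarrow> nat) \<Rightarrow> ('n \<Rightarrow> nat \<Rightarrow> nat \<Rightarrow> real)
     \<Rightarrow> ('n \<Rightarrow> real) \<Rightarrow> ('n \<Rightarrow> real) \<Rightarrow> real" where
  "objective D lam x y eta u =
     (\<Sum>n\<in>nodes D. prob D n *
        ((\<Sum>i=1..nM D. f_tilde D lam n i * cap D x n i)
         + (\<Sum>i=1..nM D. \<Sum>j=1..nN D. c_tilde D lam n i j * y n i j)
         + lambda_tilde D lam n * eta n
         + alpha_tilde D lam n * u n))"

(* constraints of the multistage model; x_n \<in> Z^M_+ is encoded with nat values;
   eta_n for leaves and u_1 do not appear in the objective (their coefficients are 0)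
   nor in the constraints. *)
definition ms_feasible ::
  "'n cp_data \<Rightarrow> ('n \<Rightarrow> nat \<Rightarrow> nat) \<Rightarrow> ('n \<Rightarrow> nat \<Rightarrow> nat \<Rightarrow> real)
     \<Rightarrow> ('n \<Rightarrow> real) \<Rightarrow> ('n \<Rightarrow> real) \<Rightarrow> bool" where
  "ms_feasible D x y eta u \<longleftrightarrow>
     (\<forall>n\<in>nodes D. \<forall>i\<in>{1..nM D}. \<forall>j\<in>{1..nN D}. y n i j \<ge> 0) \<and>
     (\<forall>n\<in>nodes D - {root D}. u n \<ge> 0) \<and>
     (\<forall>n\<in>nodes D. \<forall>j\<in>{1..nN D}. (\<Sum>i=1..nM D. y n i j) = dem D n j) \<and>
     (\<forall>n\<in>nodes D. \<forall>i\<in>{1..nM D}.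
        (1 / hc D (per D n) i) * (\<Sum>j=1..nN D. y n i j) \<le> cap D x n i) \<and>
     (\<forall>n\<in>nodes D - {root D}.
        u n + eta (par D n) \<ge>
          (\<Sum>i=1..nM D. fc D (per D n) i * cap D x n i)
          + (\<Sum>i=1..nM D. \<Sum>j=1..nN D. cc D (per D n) i j * y n i j))"

definition ts_feasible ::
  "'n cp_data \<Rightarrow> ('n \<Rightarrow> nat \<Rightarrow> nat) \<Rightarrow> ('n \<Rightarrow> nat \<Rightarrow> nat \<Rightarrow> real)
     \<Rightarrow> ('n \<Rightarrow> real) \<Rightarrow> ('n \<Rightarrow> real) \<Rightarrow> bool" where
  "ts_feasible D x y eta u \<longleftrightarrow>
     ms_feasible D x y eta u \<and>
     (\<forall>m\<in>nodes D. \<forall>n\<in>nodes D. per D m = per D n \<longrightarrow>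
        (\<forall>i\<in>{1..nM D}. x m i = x n i))"

definition z_MS :: "'n cp_data \<Rightarrow> (nat \<Rightarrow> real) \<Rightarrow> real" where
  "z_MS D lam = Inf {objective D lam x y eta u | x y eta u. ms_feasible D x y eta u}"

definition z_TS :: "'n cp_data \<Rightarrow> (nat \<Rightarrow> real) \<Rightarrow> real" where
  "z_TS D lam = Inf {objective D lam x y eta u | x y eta u. ts_feasible D x y eta u}"

end

theory Submission
  imports Defs
begin

definition Lc :: "'n cp_data \<Rightarrow> ('n \<Rightarrow> nat \<Rightarrow> nat) \<Rightarrow> ('n \<Rightarrow> nat \<Rightarrow> nat \<Rightarrow> real) \<Rightarrow> 'n \<Rightarrow> real" where
  "Lc D x y n = (\<Sum>i=1..nM D. fc D (per D n) i * cap D x n i)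
      + (\<Sum>i=1..nM D. \<Sum>j=1..nN D. cc D (per D n) i j * y n i j)"

lemma part1:
  "(\<Sum>i=1..nM D. f_tilde D lam n i * cap D x n i)
     + (\<Sum>i=1..nM D. \<Sum>j=1..nN D. c_tilde D lam n i j * y n i j)
   = (if n = root D then 1 else 1 - lam (per D n)) * Lc D x y n"
  by (cases "n = root D")
     (simp_all add: f_tilde_def c_tilde_def Lc_def sum_distrib_left ring_distribs mult.assoc)

lemma vd_facts:
  assumes "valid_data D"
  shows "finite (nodes D)"
    and "\<And>n. n \<in> nodes D \<Longrightarrow> n \<noteq> root D \<Longrightarrow> par D n \<in> nodes D \<and> per D n = per D (par D n) + 1"
    and "\<And>n. n \<in> nodes D \<Longrightarrow> 1 \<le> per D n \<and> per D n \<le> nT D"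
    and "\<And>n. n \<in> nodes D \<Longrightarrow> \<not> is_leaf D n \<Longrightarrow> (\<Sum>m\<in>children D n. prob D m) = prob D n"
    and "root D \<in> nodes D" "per D (root D) = 1"
    and "\<And>n. n \<in> nodes D \<Longrightarrow> prob D n > 0"
    and "\<And>t. t \<in> {2..nT D} \<Longrightarrow> 0 < alph D t \<and> alph D t < 1"
    and "\<And>n i. n \<in> nodes D \<Longrightarrow> i \<in> {1..nM D} \<Longrightarrow> fc D (per D n) i \<ge> 0"
    and "\<And>n i j. n \<in> nodes D \<Longrightarrow> i \<in> {1..nM D} \<Longrightarrow> j \<in> {1..nN D} \<Longrightarrow> cc D (per D n) i j \<ge> 0"
  using assms unfolding valid_data_def by auto

lemma children_eq: "children D n = {m \<in> nodes D - {root D}. par D m = n}"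
  unfolding children_def by auto

lemma identity:
  assumes vd: "valid_data D"
  shows "objective D lam x y eta u =
     (\<Sum>n\<in>nodes D. prob D n * Lc D x y n)
     + (\<Sum>m\<in>nodes D - {root D}. prob D m * lam (per D m) *
          (u m / (1 - alph D (per D m)) - Lc D x y m + eta (par D m)))"
proof -
  note F = vd_facts[OF vd]
  let ?N = "nodes D" and ?R = "nodes D - {root D}"
  let ?c = "\<lambda>n. if n = root D then 1 else 1 - lam (per D n)"
  have "objective D lam x y eta u =
      (\<Sum>n\<in>?N. prob D n * (?c n * Lc D x y n)
          + prob D n * lambda_tilde D lam n * eta n
          + prob D n * alpha_tilde D lam n * u n)"
    unfolding objective_def part1 by (simp add: distrib_left mult.assoc)
  also have "\<dots> = (\<Sum>n\<in>?N. prob D n * (?c n * Lc D x y n))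
      + (\<Sum>n\<in>?N. prob D n * lambda_tilde D lam n * eta n)
      + (\<Sum>n\<in>?N. prob D n * alpha_tilde D lam n * u n)"
    by (simp add: sum.distrib)
  also have s1: "(\<Sum>n\<in>?N. prob D n * (?c n * Lc D x y n))
     = (\<Sum>n\<in>?N. prob D n * Lc D x y n) - (\<Sum>m\<in>?R. prob D m * lam (per D m) * Lc D x y m)"
  proof -
    have "(\<Sum>n\<in>?N. prob D n * (?c n * Lc D x y n))
        = (\<Sum>n\<in>?N. prob D n * Lc D x y n - (if n = root D then 0 else prob D n * lam (per D n) * Lc D x y n))"
      by (rule sum.cong) (auto simp: algebra_simps)
    also have "\<dots> = (\<Sum>n\<in>?N. prob D n * Lc D x y n) - (\<Sum>n\<in>?N. (if n = root D then 0 else prob D n * lam (per D n) * Lc D x y n))"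
      by (simp add: sum_subtractf)
    also have "(\<Sum>n\<in>?N. (if n = root D then 0 else prob D n * lam (per D n) * Lc D x y n))
        = (\<Sum>m\<in>?R. prob D m * lam (per D m) * Lc D x y m)"
      by (subst sum.remove[OF F(1) F(5)]) (auto intro!: sum.cong)
    finally show ?thesis .
  qed
  also have s3: "(\<Sum>n\<in>?N. prob D n * alpha_tilde D lam n * u n)
      = (\<Sum>m\<in>?R. prob D m * lam (per D m) * (u m / (1 - alph D (per D m))))"
    by (subst sum.remove[OF F(1) F(5)]) (auto simp: alpha_tilde_def intro!: sum.cong)
  also have s2: "(\<Sum>n\<in>?N. prob D n * lambda_tilde D lam n * eta n)
      = (\<Sum>m\<in>?R. prob D m * lam (per D m) * eta (par D m))"
  proof -
    have "(\<Sum>n\<in>?N. prob D n * lambda_tilde D lam n * eta n)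
        = (\<Sum>n\<in>?N. \<Sum>m\<in>children D n. prob D m * lam (per D m) * eta (par D m))"
    proof (rule sum.cong[OF refl])
      fix n assume n: "n \<in> ?N"
      show "prob D n * lambda_tilde D lam n * eta n
          = (\<Sum>m\<in>children D n. prob D m * lam (per D m) * eta (par D m))"
      proof (cases "is_leaf D n")
        case True
        have "children D n = {}"
        proof (rule ccontr)
          assume "children D n \<noteq> {}"
          then obtain m where m: "m \<in> children D n" by blast
          hence "m \<in> nodes D" "m \<noteq> root D" "par D m = n" by (auto simp: children_def)
          with F(2)[of m] F(3)[of m] True show False by (auto simp: is_leaf_def)
        qed
        then show ?thesis using True by (simp add: lambda_tilde_def)
      next
        case False
        have "(\<Sum>m\<in>children D n. prob D m * lam (per D m) * eta (par D m))
            = (\<Sum>m\<in>children D n. prob D m * (lam (per D n + 1) * eta n))"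
        proof (rule sum.cong[OF refl])
          fix m assume "m \<in> children D n"
          hence "m \<in> nodes D" "m \<noteq> root D" "par D m = n" by (auto simp: children_def)
          with F(2)[of m] show "prob D m * lam (per D m) * eta (par D m) = prob D m * (lam (per D n + 1) * eta n)"
            by auto
        qed
        also have "\<dots> = (\<Sum>m\<in>children D n. prob D m) * (lam (per D n + 1) * eta n)"
          by (simp add: sum_distrib_right)
        also have "\<dots> = prob D n * (lam (per D n + 1) * eta n)" using F(4)[OF n False] by simp
        finally show ?thesis using False by (simp add: lambda_tilde_def)
      qed
    qed
    also have "\<dots> = (\<Sum>m\<in>?R. prob D m * lam (per D m) * eta (par D m))"
      unfolding children_eq
      by (rule sum.group) (use F(1) F(2) in auto)
    finally show ?thesis .
  qed
  finally show ?thesis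
    by (simp add: algebra_simps sum.distrib sum_subtractf)
qed



lemma K_nonneg:
  assumes vd: "valid_data D" and fe: "ms_feasible D x y eta u"
    and m: "m \<in> nodes D - {root D}"
  shows "0 \<le> u m / (1 - alph D (per D m)) - Lc D x y m + eta (par D m)"
proof -
  note F = vd_facts[OF vd]
  have pm: "per D m \<in> {2..nT D}" using F(2)[of m] F(3)[of m] F(3)[of "par D m"] m by auto
  then have a: "0 < alph D (per D m)" "alph D (per D m) < 1" using F(8) by auto
  have u0: "u m \<ge> 0" and uL: "u m \<ge> Lc D x y m - eta (par D m)"
  proof -
    have "Lc D x y m \<le> u m + eta (par D m)" "u m \<ge> 0"
      using fe m unfolding ms_feasible_def Lc_def by auto
    then show "u m \<ge> 0" "u m \<ge> Lc D x y m - eta (par D m)" by linarith+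
  qed
  have "u m \<le> u m / (1 - alph D (per D m))"
  proof -
    have "u m * (1 - alph D (per D m)) \<le> u m * 1" using a u0 by (intro mult_left_mono) auto
    then show ?thesis using a by (simp add: le_divide_eq)
  qed
  show ?thesis
  proof (cases "Lc D x y m - eta (par D m) \<le> 0")
    case True
    have "0 \<le> u m / (1 - alph D (per D m))" using a u0 by simp
    then show ?thesis using True by linarith
  next
    case False
    then show ?thesis using \<open>u m \<le> u m / (1 - alph D (per D m))\<close> uL by linarith
  qed
qed

lemma Lc_nonneg:
  assumes vd: "valid_data D" and fe: "ms_feasible D x y eta u" and n: "n \<in> nodes D"
  shows "0 \<le> Lc D x y n"
proof -
  note F = vd_facts[OF vd]
  have "0 \<le> cap D x n i" for i unfolding cap_def by (simp add: sum_nonneg)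
  moreover have "\<And>i j. i \<in> {1..nM D} \<Longrightarrow> j \<in> {1..nN D} \<Longrightarrow> 0 \<le> y n i j"
    using fe n unfolding ms_feasible_def by auto
  ultimately show ?thesis unfolding Lc_def using F(9)[OF n] F(10)[OF n]
    by (intro add_nonneg_nonneg sum_nonneg mult_nonneg_nonneg) auto
qed

lemma obj_props:
  assumes vd: "valid_data D" and fe: "ms_feasible D x y eta u"
    and vl: "valid_lambda D lam" and vl': "valid_lambda D lam'"
    and le: "\<forall>t\<in>{2..nT D}. lam t \<le> lam' t"
  shows "0 \<le> objective D lam x y eta u \<and> objective D lam x y eta u \<le> objective D lam' x y eta u"
proof -
  note F = vd_facts[OF vd]
  have pm: "per D m \<in> {2..nT D}" if m: "m \<in> nodes D - {root D}" for m
    using F(2)[of m] F(3)[of m] F(3)[of "par D m"] m by auto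
  have K: "0 \<le> u m / (1 - alph D (per D m)) - Lc D x y m + eta (par D m)" if "m \<in> nodes D - {root D}" for m
    using K_nonneg[OF vd fe that] .
  have "0 \<le> (\<Sum>n\<in>nodes D. prob D n * Lc D x y n)"
    using F(7) Lc_nonneg[OF vd fe] by (intro sum_nonneg mult_nonneg_nonneg) (auto intro: less_imp_le)
  moreover have "0 \<le> (\<Sum>m\<in>nodes D - {root D}. prob D m * lam (per D m) *
          (u m / (1 - alph D (per D m)) - Lc D x y m + eta (par D m)))"
    using F(7) K pm vl unfolding valid_lambda_def
    by (intro sum_nonneg mult_nonneg_nonneg) (auto intro: less_imp_le)
  moreover have "(\<Sum>m\<in>nodes D - {root D}. prob D m * lam (per D m) *
          (u m / (1 - alph D (per D m)) - Lc D x y m + eta (par D m)))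
      \<le> (\<Sum>m\<in>nodes D - {root D}. prob D m * lam' (per D m) *
          (u m / (1 - alph D (per D m)) - Lc D x y m + eta (par D m)))"
  proof (rule sum_mono)
    fix m assume m: "m \<in> nodes D - {root D}"
    have "prob D m * lam (per D m) \<le> prob D m * lam' (per D m)"
      using F(7)[of m] m le pm[OF m] by (intro mult_left_mono) auto
    then show "prob D m * lam (per D m) * (u m / (1 - alph D (per D m)) - Lc D x y m + eta (par D m))
      \<le> prob D m * lam' (per D m) * (u m / (1 - alph D (per D m)) - Lc D x y m + eta (par D m))"
      using K[OF m] by (rule mult_right_mono)
  qed
  ultimately show ?thesis unfolding identity[OF vd] by linarith
qed

lemma inf_mono_aux:
  fixes g h :: "'a \<Rightarrow> 'b \<Rightarrow> 'c \<Rightarrow> 'd \<Rightarrow> real"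
  assumes "\<And>x y e u. P x y e u \<Longrightarrow> 0 \<le> g x y e u \<and> g x y e u \<le> h x y e u"
  shows "Inf {g x y e u | x y e u. P x y e u} \<le> Inf {h x y e u | x y e u. P x y e u}"
proof (cases "\<exists>x y e u. P x y e u")
  case False
  then have "{g x y e u | x y e u. P x y e u} = {}" "{h x y e u | x y e u. P x y e u} = {}" by auto
  then show ?thesis by simp
next
  case True
  have bdd: "bdd_below {g x y e u | x y e u. P x y e u}"
    using assms by (intro bdd_belowI[of _ 0]) auto
  show ?thesis
  proof (rule cInf_greatest)
    show "{h x y e u | x y e u. P x y e u} \<noteq> {}" using True by auto
  next
    fix z assume "z \<in> {h x y e u | x y e u. P x y e u}"
    then obtain x y e u where z: "z = h x y e u" and p: "P x y e u" by auto
    have "Inf {g x y e u | x y e u. P x y e u} \<le> g x y e u"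
      using p by (intro cInf_lower[OF _ bdd]) auto
    also have "\<dots> \<le> z" using assms[OF p] z by simp
    finally show "Inf {g x y e u | x y e u. P x y e u} \<le> z" .
  qed
qed

theorem proposition1:
  fixes D :: "'n cp_data" and lam lam' :: "nat \<Rightarrow> real"
  assumes "valid_data D"
    and "valid_lambda D lam" and "valid_lambda D lam'"
    and "\<forall>t\<in>{2..nT D}. lam t \<le> lam' t"
  shows "z_MS D lam \<le> z_MS D lam' \<and> z_TS D lam \<le> z_TS D lam'"
proof
  show "z_MS D lam \<le> z_MS D lam'"
    unfolding z_MS_def by (rule inf_mono_aux) (rule obj_props[OF assms(1) _ assms(2-4)])
  show "z_TS D lam \<le> z_TS D lam'"
    unfolding z_TS_def ts_feasible_def
    by (rule inf_mono_aux) (rule obj_props[OF assms(1) _ assms(2-4)], simp)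
qed

end
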